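(* In a two-player perfect-information game of depth $D$, let $\{\tilde U_s\}$ be learned EPFs with targets $\tilde U'_s$, and let $\tilde Q_s$ be the induced leader payoff functions, as in the context. Suppose $L_\infty(\tilde U_s,\tilde U'_s)\le\epsilon$ for all $s\in\mathcal S$. Then $|\tilde Q_s(\mu_2)-\tilde U_s(\mu_2)|\le\epsilon D$ for all $s\in\mathcal S$ and all $\mu_2\in[\underline V(s),\overline V(s)]$.
   Context: A two-player perfect-information game is a finite rooted tree with states $\mathcal S$. Its leaves $\mathcal L$ carry payoffs $r_1(\ell),r_2(\ell)$ for the leader $\mathsf P_1$ and the follower $\mathsf P_2$. Non-leaf states are partitioned into leader states $\mathcal S_1$ and follower states $\mathcal S_2$, and $\mathcal C(s)$ denotes the children of $s$. The depth $D$ is the maximum number of edges on a root-to-leaf path. Bounds, defined by backward induction: - $\underline V(\ell)=\overline V(\ell)=r_2(\ell)$ for leaves; - $\underline V(s)=\min_{s'}\underline V(s')$ for $s\in\mathcal S_1$; - $\underline V(s)=\max_{s'}\underline V(s')$ for $s\in\mathcal S_2$; - $\overline V(s)=\max_{s'}\overline V(s')$ for every non-leaf $s$. For $s\in\mathcal S_2$ and $s'\in\mathcal C(s)$, let $\tau(s')=\max_{s^!\in\mathcal C(s),s^!\ne s'}\underline V(s^!)$. Let $\beta(s')=\tau(s')$ if the parent of $s'$ is in $\mathcal S_2$, and $-\infty$ if it is in $\mathcal S_1$. Operators, for $g:\mathbb R\to\mathbb R\cup\{-\infty\}$: - $\bigwedge_i g_i$ is the pointwise infimum of all concave $h\ge\max_i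 g_i$; - $[g\triangleright t](\mu)=g(\mu)$ for $\mu\ge t$ and $-\infty$ otherwise. Learned EPFs: for a leaf, $\tilde U_\ell(\mu)=r_1(\ell)$ if $\mu=r_2(\ell)$ and $-\infty$ otherwise. For non-leaf $s$, $\tilde U_s$ is the piecewise linear interpolation of finitely many points with $x$-coordinates in $[\underline V(s),\overline V(s)]$ including both endpoints. It is real-valued there and $-\infty$ outside. Targets: $\tilde U'_s=\bigwedge_{s'\in\mathcal C(s)}(\tilde U_{s'}\triangleright\beta(s'))$ for non-leaf $s$, and $\tilde U'_\ell=\tilde U_\ell$. The loss is $L_\infty(f,g)=\sup_\mu|f(\mu)-g(\mu)|$, with $|(-\infty)-(-\infty)|=0$. Induced payoff $\tilde Q_s:[\underline V(s),\overline V(s)]\to\mathbb R$: for leaves, $\tilde Q_\ell(r_2(\ell))=r_1(\ell)$. For non-leaf $s$ and promise $\mu_2$, let $(\tilde s',\tilde s'',\tilde t,\tilde\mu',\tilde\mu'')$ be the chosen maximizer, over $s',s''\in\mathcal C(s)$, $t\in[0,1]$, $\mu',\mu''$ with $t\mu'+(1-t)\mu''=\mu_2$, of $t[\tilde U_{s'}\triangleright\beta(s')](\mu')+(1-t)[\tilde U_{s''}\triangleright\beta(s'')](\mu'')$. Then $$\tilde Q_s(\mu_2)=\tilde t\,\tilde Q_{\tilde s'}(\tilde\mu')+(1-\tilde t)\,\tilde Q_{\tilde s''}(\tilde\mu'').$$ Thus $\tilde Q_s(\mu_2)$ is the leader's expected payoff when play starts at $s$ with promise $\mu_2$ to the follower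 and proceeds by this one-step-lookahead rule (moving to $\tilde s'$ with probability $\tilde t$ and promise $\tilde\mu'$, and to $\tilde s''$ with probability $1-\tilde t$ and promise $\tilde\mu''$). *)

theory Defs
  imports "HOL-Analysis.Analysis" "HOL-Library.Extended_Real"
begin

text \<open>A leaf carries the payoffs (r1, r2) for leader and
  follower. An inner node carries a flag: True = leader state (S1), False = follower
  state (S2), and its list of children.\<close>

datatype gtree = Leaf real real | Node bool "gtree list"

fun wf_tree :: "gtree \<Rightarrow> bool" where
  "wf_tree (Leaf _ _) = True"
| "wf_tree (Node _ ts) = (ts \<noteq> [] \<and> (\<forall>t\<in>set ts. wf_tree t))"

text \<open>States are positions (paths of child indices from the root).\<close>
fun sub :: "gtree \<Rightarrow> nat list \<Rightarrow> gtree option" where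
  "sub t [] = Some t"
| "sub (Leaf _ _) (i # p) = None"
| "sub (Node b ts) (i # p) = (if i < length ts then sub (ts ! i) p else None)"

fun depth :: "gtree \<Rightarrow> nat" where
  "depth (Leaf _ _) = 0"
| "depth (Node _ ts) = Suc (foldr max (map depth ts) 0)"

fun vlo :: "gtree \<Rightarrow> real" where
  "vlo (Leaf r1 r2) = r2"
| "vlo (Node b ts) = (if b then Min (set (map vlo ts)) else Max (set (map vlo ts)))"

fun vhi :: "gtree \<Rightarrow> real" where
  "vhi (Leaf r1 r2) = r2"
| "vhi (Node b ts) = Max (set (map vhi ts))"

text \<open>tau for child i of a follower node with children ts: maximum of the lower bounds
  of the other children (maximum over the empty set = -\<infinity>).\<close>
definition tau :: "gtree list \<Rightarrow> nat \<Rightarrow> ereal" where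
  "tau ts i = (SUP j \<in> {j. j < length ts \<and> j \<noteq> i}. ereal (vlo (ts ! j)))"

definition beta :: "bool \<Rightarrow> gtree list \<Rightarrow> nat \<Rightarrow> ereal" where
  "beta b ts i = (if b then -\<infinity> else tau ts i)"

definition trunc :: "(real \<Rightarrow> ereal) \<Rightarrow> ereal \<Rightarrow> real \<Rightarrow> ereal" where
  "trunc g t \<mu> = (if ereal \<mu> \<ge> t then g \<mu> else -\<infinity>)"

definition concave_ext :: "(real \<Rightarrow> ereal) \<Rightarrow> bool" where
  "concave_ext h \<longleftrightarrow> (\<forall>x. h x \<noteq> \<infinity>) \<and>
     (\<forall>x y t. 0 \<le> t \<and> t \<le> 1 \<longrightarrow>
        ereal t * h x + ereal (1 - t) * h y \<le> h (t * x + (1 - t) * y))"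

definition env :: "(real \<Rightarrow> ereal) set \<Rightarrow> real \<Rightarrow> ereal" where
  "env G \<mu> = (INF h \<in> {h. concave_ext h \<and> (\<forall>g\<in>G. \<forall>x. g x \<le> h x)}. h \<mu>)"

text \<open>L-infinity loss, with |(-\<infinity>) - (-\<infinity>)| = 0.\<close>
definition linf :: "(real \<Rightarrow> ereal) \<Rightarrow> (real \<Rightarrow> ereal) \<Rightarrow> ereal" where
  "linf f g = (SUP \<mu>. if f \<mu> = g \<mu> then 0 else \<bar>f \<mu> - g \<mu>\<bar>)"

definition pl_epf :: "real \<Rightarrow> real \<Rightarrow> (real \<Rightarrow> ereal) \<Rightarrow> bool" where
  "pl_epf lo hi u \<longleftrightarrow>
     (\<exists>P f. finite P \<and> lo \<in> P \<and> hi \<in> P \<and> P \<subseteq> {lo..hi} \<and>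
        (\<forall>x. x \<notin> {lo..hi} \<longrightarrow> u x = -\<infinity>) \<and>
        (\<forall>x\<in>{lo..hi}. u x = ereal (f x)) \<and>
        (\<forall>a\<in>P. \<forall>b\<in>P. a < b \<and> {a<..<b} \<inter> P = {} \<longrightarrow>
            (\<forall>x\<in>{a..b}. f x = ((b - x) * f a + (x - a) * f b) / (b - a))))"

definition leaf_epf :: "real \<Rightarrow> real \<Rightarrow> real \<Rightarrow> ereal" where
  "leaf_epf r1 r2 \<mu> = (if \<mu> = r2 then ereal r1 else -\<infinity>)"

definition target :: "gtree \<Rightarrow> (nat list \<Rightarrow> real \<Rightarrow> ereal) \<Rightarrow> nat list \<Rightarrow> real \<Rightarrow> ereal" where
  "target T U p = (case sub T p of
      Some (Node b ts) \<Rightarrow> env {trunc (U (p @ [i])) (beta b ts i) | i. i < length ts}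
    | _ \<Rightarrow> U p)"

text \<open>A candidate (i, j, t, \<mu>', \<mu>''): move to child i w.p. t with promise \<mu>', to child j
  w.p. 1 - t with promise \<mu>''.\<close>
definition feasible :: "gtree list \<Rightarrow> real \<Rightarrow> nat \<times> nat \<times> real \<times> real \<times> real \<Rightarrow> bool" where
  "feasible ts \<mu> c = (case c of (i, j, t, m1, m2) \<Rightarrow>
     i < length ts \<and> j < length ts \<and> 0 \<le> t \<and> t \<le> 1 \<and> t * m1 + (1 - t) * m2 = \<mu>)"

definition cand_val :: "(nat list \<Rightarrow> real \<Rightarrow> ereal) \<Rightarrow> nat list \<Rightarrow> bool \<Rightarrow> gtree list \<Rightarrow>
    nat \<times> nat \<times> real \<times> real \<times> real \<Rightarrow> ereal" where
  "cand_val U p b ts c = (case c of (i, j, t, m1, m2) \<Rightarrow>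
     ereal t * trunc (U (p @ [i])) (beta b ts i) m1
     + ereal (1 - t) * trunc (U (p @ [j])) (beta b ts j) m2)"

definition is_maximizer :: "(nat list \<Rightarrow> real \<Rightarrow> ereal) \<Rightarrow> nat list \<Rightarrow> bool \<Rightarrow> gtree list \<Rightarrow>
    real \<Rightarrow> nat \<times> nat \<times> real \<times> real \<times> real \<Rightarrow> bool" where
  "is_maximizer U p b ts \<mu> c \<longleftrightarrow> feasible ts \<mu> c \<and>
     (\<forall>c'. feasible ts \<mu> c' \<longrightarrow> cand_val U p b ts c' \<le> cand_val U p b ts c)"

end

theory Submission
  imports Defs
begin

lemma slope_ineq:
  fixes ap ak z vp vk M :: real
  assumes "ap < z" "z < ak"
    and I: "vp + (vk - vp) * (z - ap) / (ak - ap) \<le> M"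
  shows "(vk - M) / (ak - z) \<le> (M - vp) / (z - ap)"
proof -
  have h1: "ak - ap > 0" "ak - z > 0" "z - ap > 0" using assms by auto
  have "vp * (ak - ap) + (vk - vp) * (z - ap) \<le> M * (ak - ap)"
    using I h1 by (simp add: field_simps)
  hence "(vk - M) * (z - ap) \<le> (M - vp) * (ak - z)" by (simp add: algebra_simps)
  thus ?thesis using h1 by (simp add: field_simps)
qed

lemma two_point:
  fixes K :: "'k set" and w a v :: "'k \<Rightarrow> real"
  assumes fin: "finite K" and wnn: "\<And>k. k \<in> K \<Longrightarrow> w k \<ge> 0"
    and ws: "(\<Sum>k\<in>K. w k) = 1" and za: "(\<Sum>k\<in>K. w k * a k) = z"
  shows "\<exists>p\<in>K. \<exists>q\<in>K. \<exists>\<tau>. 0 \<le> \<tau> \<and> \<tau> \<le> 1 \<and> \<tau> * a p + (1 - \<tau>) * a q = z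
            \<and> (\<Sum>k\<in>K. w k * v k) \<le> \<tau> * v p + (1 - \<tau>) * v q"
proof -
  have Kne: "K \<noteq> {}" using ws by auto
  define I where "I = (\<lambda>(p,q). if a q = a p then v p else v p + (v q - v p) * (z - a p) / (a q - a p))"
  define Pairs where "Pairs = {(p,q). p \<in> K \<and> q \<in> K \<and> a p \<le> z \<and> z \<le> a q}"
  have finP: "finite Pairs" unfolding Pairs_def
    by (rule finite_subset[of _ "K \<times> K"]) (use fin in auto)
  obtain p0 where p0: "p0 \<in> K" "\<And>k. k \<in> K \<Longrightarrow> a p0 \<le> a k"
  proof -
    obtain p where "p \<in> K" "a p = Min (a ` K)" using fin Kne
      by (metis (mono_tags, lifting) Min_in finite_imageI image_iff image_is_empty)
    thus ?thesis using that fin by auto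
  qed
  obtain q0 where q0: "q0 \<in> K" "\<And>k. k \<in> K \<Longrightarrow> a k \<le> a q0"
  proof -
    obtain p where "p \<in> K" "a p = Max (a ` K)" using fin Kne
      by (metis (mono_tags, lifting) Max_in finite_imageI image_iff image_is_empty)
    thus ?thesis using that fin by auto
  qed
  have "a p0 = (\<Sum>k\<in>K. w k * a p0)" using ws by (simp add: sum_distrib_right[symmetric])
  also have "\<dots> \<le> z" unfolding za[symmetric] by (rule sum_mono) (use wnn p0 in \<open>auto intro: mult_left_mono\<close>)
  finally have "a p0 \<le> z" .
  have "z \<le> (\<Sum>k\<in>K. w k * a q0)" unfolding za[symmetric] by (rule sum_mono) (use wnn q0 in \<open>auto intro: mult_left_mono\<close>)
  also have "\<dots> = a q0" using ws by (simp add: sum_distrib_right[symmetric])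
  finally have "z \<le> a q0" .
  have Pne: "Pairs \<noteq> {}" using \<open>a p0 \<le> z\<close> \<open>z \<le> a q0\<close> p0 q0 unfolding Pairs_def by auto
  define M where "M = Max (I ` Pairs)"
  have MI: "\<And>p q. (p,q) \<in> Pairs \<Longrightarrow> I (p,q) \<le> M" unfolding M_def using finP by auto
  obtain pq where pq: "pq \<in> Pairs" "I pq = M" unfolding M_def using finP Pne
    by (metis (mono_tags, lifting) Max_in finite_imageI image_iff image_is_empty)
  obtain p q where pqd: "pq = (p,q)" by (cases pq)
  have pK: "p \<in> K" "q \<in> K" "a p \<le> z" "z \<le> a q" using pq pqd unfolding Pairs_def by auto
  have witness: "\<exists>\<tau>. 0 \<le> \<tau> \<and> \<tau> \<le> 1 \<and> \<tau> * a p + (1 - \<tau>) * a q = z \<and> M \<le> \<tau> * v p + (1 - \<tau>) * v q"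
  proof (cases "a q = a p")
    case True
    then show ?thesis using pK pq pqd by (intro exI[of _ 1]) (auto simp: I_def)
  next
    case False
    hence d: "a q - a p > 0" using pK by auto
    define \<tau> where "\<tau> = (a q - z) / (a q - a p)"
    have "0 \<le> \<tau>" "\<tau> \<le> 1" using pK d by (auto simp: \<tau>_def field_simps)
    moreover have "\<tau> * a p + (1 - \<tau>) * a q = z"
    proof -
      have "\<tau> * (a q - a p) = a q - z" using d by (simp add: \<tau>_def)
      thus ?thesis by (simp add: algebra_simps)
    qed
    moreover have "M = \<tau> * v p + (1 - \<tau>) * v q"
    proof -
      have M1: "M = v p + (v q - v p) * (z - a p) / (a q - a p)" using pq pqd False by (simp add: I_def)
      have "1 - \<tau> = (z - a p) / (a q - a p)" using d by (simp add: \<tau>_def field_simps)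
      hence "\<tau> * v p + (1 - \<tau>) * v q = v p + (1 - \<tau>) * (v q - v p)" by (simp add: algebra_simps)
      also have "\<dots> = M" using M1 \<open>1 - \<tau> = _\<close> by simp
      finally show ?thesis by simp
    qed
    ultimately show ?thesis by auto
  qed
  define A where "A = {k\<in>K. a k < z}"
  define B where "B = {k\<in>K. a k > z}"
  define sL where "sL = (\<lambda>k. (M - v k) / (z - a k))"
  define sR where "sR = (\<lambda>k. (v k - M) / (a k - z))"
  define \<sigma> where "\<sigma> = (if A = {} then (if B = {} then 0 else Max (sR ` B)) else Min (sL ` A))"
  have finA: "finite A" "finite B" using fin unfolding A_def B_def by auto
  have pw: "v k \<le> M + \<sigma> * (a k - z)" if k: "k \<in> K" for k
  proof -
    consider "a k = z" | "a k < z" | "a k > z" by linarith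
    then show ?thesis
    proof cases
      case 1
      hence "(k,k) \<in> Pairs" using k unfolding Pairs_def by auto
      from MI[OF this] 1 show ?thesis by (simp add: I_def)
    next
      case 2
      hence kA: "k \<in> A" using k by (auto simp: A_def)
      hence "\<sigma> \<le> sL k" using finA by (auto simp: \<sigma>_def)
      thus ?thesis using 2 by (simp add: sL_def field_simps)
    next
      case 3
      hence kB: "k \<in> B" using k by (auto simp: B_def)
      have "sR k \<le> \<sigma>"
      proof (cases "A = {}")
        case True thus ?thesis using kB finA by (auto simp: \<sigma>_def)
      next
        case False
        obtain p' where p': "p' \<in> A" "Min (sL ` A) = sL p'"
          using False finA by (metis (mono_tags, lifting) Min_in finite_imageI image_iff image_is_empty)
        have "(p',k) \<in> Pairs" using p' kB unfolding Pairs_def A_def B_def by auto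
        from MI[OF this] have "I (p',k) \<le> M" .
        moreover have "a k \<noteq> a p'" using p' kB unfolding A_def B_def by auto
        ultimately have "v p' + (v k - v p') * (z - a p') / (a k - a p') \<le> M" by (simp add: I_def)
        from slope_ineq[OF _ _ this] p' kB show ?thesis
          using False by (auto simp: \<sigma>_def sL_def sR_def A_def B_def)
      qed
      thus ?thesis using 3 by (simp add: sR_def field_simps)
    qed
  qed
  have "(\<Sum>k\<in>K. w k * v k) \<le> (\<Sum>k\<in>K. w k * (M + \<sigma> * (a k - z)))"
    by (rule sum_mono) (use wnn pw in \<open>auto intro: mult_left_mono\<close>)
  also have "\<dots> = M * (\<Sum>k\<in>K. w k) + \<sigma> * ((\<Sum>k\<in>K. w k * a k) - z * (\<Sum>k\<in>K. w k))"
    by (simp add: algebra_simps sum.distrib sum_distrib_left sum_subtractf)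
  also have "\<dots> = M" using ws za by simp
  finally have fin1: "(\<Sum>k\<in>K. w k * v k) \<le> M" .
  obtain \<tau> where "0 \<le> \<tau>" "\<tau> \<le> 1" "\<tau> * a p + (1 - \<tau>) * a q = z" "M \<le> \<tau> * v p + (1 - \<tau>) * v q"
    using witness by blast
  then show ?thesis using pK fin1 by (intro bexI[of _ p] bexI[of _ q] exI[of _ \<tau>]) auto
qed

definition cvG :: "(nat \<Rightarrow> real \<Rightarrow> ereal) \<Rightarrow> nat \<times> nat \<times> real \<times> real \<times> real \<Rightarrow> ereal" where
  "cvG G c = (case c of (i, j, t, m1, m2) \<Rightarrow> ereal t * G i m1 + ereal (1 - t) * G j m2)"

definition feasN :: "nat \<Rightarrow> real \<Rightarrow> nat \<times> nat \<times> real \<times> real \<times> real \<Rightarrow> bool" where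
  "feasN n \<mu> c = (case c of (i, j, t, m1, m2) \<Rightarrow>
     i < n \<and> j < n \<and> 0 \<le> t \<and> t \<le> 1 \<and> t * m1 + (1 - t) * m2 = \<mu>)"

definition FG :: "(nat \<Rightarrow> real \<Rightarrow> ereal) \<Rightarrow> nat \<Rightarrow> real \<Rightarrow> ereal" where
  "FG G n z = (SUP c\<in>{c. feasN n z c}. cvG G c)"

lemma sup_comb:
  fixes f :: "'a \<Rightarrow> ereal" and g :: "'b \<Rightarrow> ereal"
  assumes A: "A \<noteq> {}" and B: "B \<noteq> {}" and X: "(SUP a\<in>A. f a) \<noteq> \<infinity>" and Y: "(SUP b\<in>B. g b) \<noteq> \<infinity>"
    and le: "\<And>a b. a \<in> A \<Longrightarrow> b \<in> B \<Longrightarrow> f a + g b \<le> z"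
  shows "(SUP a\<in>A. f a) + (SUP b\<in>B. g b) \<le> z"
proof (cases "(SUP b\<in>B. g b) = -\<infinity>")
  case True
  then show ?thesis using X by (cases "(SUP a\<in>A. f a)") auto
next
  case False
  have "(SUP a\<in>A. f a) + (SUP b\<in>B. g b) = (SUP a\<in>A. f a + (SUP b\<in>B. g b))"
    by (rule SUP_ereal_add_left[symmetric]) (use A False in auto)
  also have "\<dots> \<le> z"
  proof (rule SUP_least)
    fix a assume a: "a \<in> A"
    show "f a + (SUP b\<in>B. g b) \<le> z"
    proof (cases "f a = -\<infinity>")
      case True
      then show ?thesis using Y by (cases "(SUP b\<in>B. g b)") auto
    next
      case False
      have "f a + (SUP b\<in>B. g b) = (SUP b\<in>B. f a + g b)"
        by (rule SUP_ereal_add_right[symmetric]) (use B False in auto)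
      also have "\<dots> \<le> z" by (rule SUP_least) (use le a in auto)
      finally show ?thesis .
    qed
  qed
  finally show ?thesis .
qed

lemma cvG_bound:
  assumes bnd: "\<And>i x. i < n \<Longrightarrow> G i x \<le> ereal B" and f: "feasN n z c"
  shows "cvG G c \<le> ereal B"
proof -
  obtain i j t m1 m2 where c: "c = (i, j, t, m1, m2)" by (cases c) auto
  have ij: "i < n" "j < n" "0 \<le> t" "t \<le> 1" using f by (auto simp: c feasN_def)
  have "ereal t * G i m1 + ereal (1 - t) * G j m2 \<le> ereal t * ereal B + ereal (1 - t) * ereal B"
    by (intro add_mono ereal_mult_left_mono bnd) (use ij in auto)
  also have "\<dots> = ereal B" by (simp add: algebra_simps)
  finally show ?thesis by (simp add: cvG_def c)
qed

lemma FG_bound: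
  assumes bnd: "\<And>i x. i < n \<Longrightarrow> G i x \<le> ereal B"
  shows "FG G n z \<le> ereal B"
  unfolding FG_def by (rule SUP_least) (auto intro: cvG_bound bnd)

lemma FG_ge:
  assumes "i < n" shows "G i x \<le> FG G n x"
proof -
  have "feasN n x (i, i, 1, x, x)" using assms by (simp add: feasN_def)
  hence "cvG G (i, i, 1, x, x) \<le> FG G n x" unfolding FG_def by (rule SUP_upper[OF CollectI])
  thus ?thesis by (simp add: cvG_def zero_ereal_def[symmetric])
qed

lemma mult_fin:
  fixes g :: ereal
  assumes "0 \<le> t" "g \<noteq> \<infinity>" "ereal t * g \<noteq> -\<infinity>"
  shows "ereal t * g = ereal (t * real_of_ereal g) \<and> (t \<noteq> 0 \<longrightarrow> g = ereal (real_of_ereal g))"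
  using assms by (cases g; cases "t = 0") (auto simp: zero_ereal_def)

lemma sum4: fixes f :: "nat \<Rightarrow> real" shows "(\<Sum>k<4. f k) = f 0 + f 1 + f 2 + (f 3 :: real)"
  by (simp add: numeral_eq_Suc add.commute add.left_commute)

lemma FG_key:
  assumes bnd: "\<And>i x. i < n \<Longrightarrow> G i x \<le> ereal B"
    and s: "0 < s" "s < 1" and f1: "feasN n x c1" and f2: "feasN n y c2"
  shows "ereal s * cvG G c1 + ereal (1 - s) * cvG G c2 \<le> FG G n (s * x + (1 - s) * y)"
proof -
  obtain i1 j1 t1 a1 a2 where c1: "c1 = (i1, j1, t1, a1, a2)" by (cases c1) auto
  obtain i2 j2 t2 b1 b2 where c2: "c2 = (i2, j2, t2, b1, b2)" by (cases c2) auto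
  have h1: "i1 < n" "j1 < n" "0 \<le> t1" "t1 \<le> 1" "t1 * a1 + (1 - t1) * a2 = x"
    using f1 by (auto simp: c1 feasN_def)
  have h2: "i2 < n" "j2 < n" "0 \<le> t2" "t2 \<le> 1" "t2 * b1 + (1 - t2) * b2 = y"
    using f2 by (auto simp: c2 feasN_def)
  have ninf: "G i x \<noteq> \<infinity>" if "i < n" for i x using bnd[OF that, of x] by auto
  have "cvG G c1 \<le> ereal B" by (rule cvG_bound[OF _ f1]) (rule bnd)
  hence C1: "cvG G c1 \<noteq> \<infinity>" by auto
  have "cvG G c2 \<le> ereal B" by (rule cvG_bound[OF _ f2]) (rule bnd)
  hence C2: "cvG G c2 \<noteq> \<infinity>" by auto
  show ?thesis
  proof (cases "cvG G c1 = -\<infinity> \<or> cvG G c2 = -\<infinity>")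
    case True
    then show ?thesis using C1 C2 s by (cases "cvG G c1"; cases "cvG G c2") auto
  next
    case False
    have p1: "ereal t1 * G i1 a1 \<noteq> -\<infinity>" "ereal (1 - t1) * G j1 a2 \<noteq> -\<infinity>"
      "ereal t2 * G i2 b1 \<noteq> -\<infinity>" "ereal (1 - t2) * G j2 b2 \<noteq> -\<infinity>"
      using False h1 h2 ninf by (auto simp: cvG_def c1 c2)
    define idx where "idx = (!) [i1, j1, i2, j2]"
    define pt where "pt = (!) [a1, a2, b1, b2]"
    define w where "w = (!) [s * t1, s * (1 - t1), (1 - s) * t2, (1 - s) * (1 - t2)]"
    define v where "v = (\<lambda>k. real_of_ereal (G (idx k) (pt k)))"
    have e1: "ereal t1 * G i1 a1 = ereal (t1 * v 0)" "t1 \<noteq> 0 \<longrightarrow> G i1 a1 = ereal (v 0)"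
      using mult_fin[OF _ ninf p1(1)] h1 by (auto simp: v_def idx_def pt_def)
    have e2: "ereal (1 - t1) * G j1 a2 = ereal ((1 - t1) * v 1)" "1 - t1 \<noteq> 0 \<longrightarrow> G j1 a2 = ereal (v 1)"
      using mult_fin[OF _ ninf p1(2)] h1 by (auto simp: v_def idx_def pt_def)
    have e3: "ereal t2 * G i2 b1 = ereal (t2 * v 2)" "t2 \<noteq> 0 \<longrightarrow> G i2 b1 = ereal (v 2)"
      using mult_fin[OF _ ninf p1(3)] h2 by (auto simp: v_def idx_def pt_def)
    have e4: "ereal (1 - t2) * G j2 b2 = ereal ((1 - t2) * v 3)" "1 - t2 \<noteq> 0 \<longrightarrow> G j2 b2 = ereal (v 3)"
      using mult_fin[OF _ ninf p1(4)] h2 by (auto simp: v_def idx_def pt_def numeral_eq_Suc)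
    have fin: "G (idx k) (pt k) = ereal (v k)" if "k < 4" "w k \<noteq> 0" for k
    proof -
      have "k = 0 \<or> k = 1 \<or> k = 2 \<or> k = 3" using that by auto
      thus ?thesis using that e1 e2 e3 e4 by (auto simp: w_def idx_def pt_def)
    qed
    have idxn: "idx k < n" if "k < 4" for k
    proof -
      have "k = 0 \<or> k = 1 \<or> k = 2 \<or> k = 3" using that by auto
      thus ?thesis using h1 h2 by (auto simp: idx_def)
    qed
    have wnn: "w k \<ge> 0" if "k < 4" for k
    proof -
      have "k = 0 \<or> k = 1 \<or> k = 2 \<or> k = 3" using that by auto
      thus ?thesis using h1 h2 s by (auto simp: w_def)
    qed
    define K where "K = {k. k < 4 \<and> w k \<noteq> 0}"
    have finK: "finite K" unfolding K_def by auto
    have sK: "(\<Sum>k\<in>K. f k) = (\<Sum>k<4. f k)" if "\<And>k. w k = 0 \<Longrightarrow> f k = 0" for f :: "nat \<Rightarrow> real"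
      by (rule sum.mono_neutral_left) (use that in \<open>auto simp: K_def\<close>)
    have ws: "(\<Sum>k\<in>K. w k) = 1" by (subst sK) (auto simp: sum4 w_def algebra_simps)
    have za: "(\<Sum>k\<in>K. w k * pt k) = s * x + (1 - s) * y"
      by (subst sK) (auto simp: sum4 w_def pt_def h1(5)[symmetric] h2(5)[symmetric] algebra_simps)
    have cc1: "cvG G c1 = ereal (t1 * v 0 + (1 - t1) * v 1)"
      by (simp only: cvG_def c1 prod.case e1(1) e2(1) plus_ereal.simps)
    have cc2: "cvG G c2 = ereal (t2 * v 2 + (1 - t2) * v 3)"
      by (simp only: cvG_def c2 prod.case e3(1) e4(1) plus_ereal.simps)
    have LHS: "ereal s * cvG G c1 + ereal (1 - s) * cvG G c2 = ereal (\<Sum>k\<in>K. w k * v k)"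
      unfolding cc1 cc2 by (subst sK) (auto simp: sum4 w_def algebra_simps)
    obtain p q \<tau> where pq: "p \<in> K" "q \<in> K" "0 \<le> \<tau>" "\<tau> \<le> 1" "\<tau> * pt p + (1 - \<tau>) * pt q = s * x + (1 - s) * y"
      "(\<Sum>k\<in>K. w k * v k) \<le> \<tau> * v p + (1 - \<tau>) * v q"
      using two_point[OF finK _ ws za, of v] wnn unfolding K_def by blast
    have feas: "feasN n (s * x + (1 - s) * y) (idx p, idx q, \<tau>, pt p, pt q)"
      using pq idxn by (auto simp: feasN_def K_def)
    have cv: "cvG G (idx p, idx q, \<tau>, pt p, pt q) = ereal (\<tau> * v p + (1 - \<tau>) * v q)"
      using fin pq(1,2) by (auto simp: cvG_def K_def)
    have "ereal s * cvG G c1 + ereal (1 - s) * cvG G c2 \<le> cvG G (idx p, idx q, \<tau>, pt p, pt q)"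
      using LHS cv pq(6) by simp
    also have "\<dots> \<le> FG G n (s * x + (1 - s) * y)"
      unfolding FG_def by (rule SUP_upper) (use feas in auto)
    finally show ?thesis .
  qed
qed

lemma FG_concave:
  assumes bnd: "\<And>i x. i < n \<Longrightarrow> G i x \<le> ereal B" and n: "0 < n"
  shows "concave_ext (FG G n)"
  unfolding concave_ext_def
proof (intro conjI allI impI)
  fix x show "FG G n x \<noteq> \<infinity>" using FG_bound[of n G B x] bnd by auto
next
  fix x y and s :: real assume s: "0 \<le> s \<and> s \<le> 1"
  have ninf: "FG G n z \<noteq> \<infinity>" for z using FG_bound[of n G B z] bnd by auto
  consider "s = 0" | "s = 1" | "0 < s \<and> s < 1" using s by linarith
  then show "ereal s * FG G n x + ereal (1 - s) * FG G n y \<le> FG G n (s * x + (1 - s) * y)"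
  proof cases
    case 1 then show ?thesis by (simp add: zero_ereal_def[symmetric])
  next
    case 2 then show ?thesis by (simp add: zero_ereal_def[symmetric])
  next
    case 3
    have ne: "{c. feasN n z c} \<noteq> {}" for z
    proof -
      have "feasN n z (0, 0, 1, z, z)" using n by (simp add: feasN_def)
      thus ?thesis by blast
    qed
    have m1: "ereal s * FG G n x = (SUP c\<in>{c. feasN n x c}. ereal s * cvG G c)"
      unfolding FG_def by (rule Sup_ereal_mult_left'[OF ne]) (use 3 in auto)
    have m2: "ereal (1 - s) * FG G n y = (SUP c\<in>{c. feasN n y c}. ereal (1 - s) * cvG G c)"
      unfolding FG_def by (rule Sup_ereal_mult_left'[OF ne]) (use 3 in auto)
    have f1: "ereal s * FG G n x \<noteq> \<infinity>" using ninf[of x] 3 by (cases "FG G n x") auto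
    have f2: "ereal (1 - s) * FG G n y \<noteq> \<infinity>" using ninf[of y] 3 by (cases "FG G n y") auto
    show ?thesis unfolding m1 m2
      by (rule sup_comb[OF ne ne]) (use f1 f2 m1 m2 FG_key[OF bnd] 3 in auto)
  qed
qed

lemma env_le_cv:
  assumes bnd: "\<And>i x. i < n \<Longrightarrow> G i x \<le> ereal B"
    and f: "feasN n \<mu> c" and mx: "\<And>c'. feasN n \<mu> c' \<Longrightarrow> cvG G c' \<le> cvG G c"
  shows "env {G i | i. i < n} \<mu> \<le> cvG G c"
proof -
  have n: "0 < n" using f by (cases c) (auto simp: feasN_def)
  have "env {G i | i. i < n} \<mu> \<le> FG G n \<mu>"
    unfolding env_def by (rule INF_lower) (use FG_concave[OF bnd n] FG_ge in auto)
  also have "\<dots> \<le> cvG G c" unfolding FG_def by (rule SUP_least) (use mx in auto)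
  finally show ?thesis .
qed

lemma cv_le_env:
  assumes f: "feasN n \<mu> c"
  shows "cvG G c \<le> env {G i | i. i < n} \<mu>"
  unfolding env_def
proof (rule INF_greatest)
  fix h assume h: "h \<in> {h. concave_ext h \<and> (\<forall>g\<in>{G i | i. i < n}. \<forall>x. g x \<le> h x)}"
  obtain i j t m1 m2 where c: "c = (i, j, t, m1, m2)" by (cases c) auto
  have ij: "i < n" "j < n" "0 \<le> t" "t \<le> 1" "t * m1 + (1 - t) * m2 = \<mu>" using f by (auto simp: c feasN_def)
  have "ereal t * G i m1 + ereal (1 - t) * G j m2 \<le> ereal t * h m1 + ereal (1 - t) * h m2"
    by (intro add_mono ereal_mult_left_mono) (use h ij in auto)
  also have "\<dots> \<le> h \<mu>" using h ij unfolding concave_ext_def by auto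
  finally show "cvG G c \<le> h \<mu>" by (simp add: cvG_def c)
qed

lemma sub_append: "sub T (p @ q) = (case sub T p of None \<Rightarrow> None | Some s \<Rightarrow> sub s q)"
proof (induction p arbitrary: T)
  case Nil then show ?case by simp
next
  case (Cons i p) then show ?case by (cases T) auto
qed

lemma sub_child: "sub T p = Some (Node b ts) \<Longrightarrow> i < length ts \<Longrightarrow> sub T (p @ [i]) = Some (ts ! i)"
  by (simp add: sub_append)

lemma foldr_max_ge: "x \<in> set xs \<Longrightarrow> x \<le> foldr max xs (0::nat)"
  by (induction xs) auto

lemma depth_child: "i < length ts \<Longrightarrow> depth (ts ! i) \<le> foldr max (map depth ts) 0"
  by (rule foldr_max_ge) auto

lemma depth_sub: "sub T p = Some s \<Longrightarrow> depth s \<le> depth T"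
proof (induction p arbitrary: T)
  case Nil then show ?case by simp
next
  case (Cons i p)
  then obtain b ts where T: "T = Node b ts" "i < length ts" "sub (ts ! i) p = Some s"
    by (cases T) (auto split: if_splits)
  have "depth s \<le> depth (ts ! i)" using Cons.IH T(3) .
  also have "\<dots> \<le> depth T" using depth_child[OF T(2)] T(1) by simp
  finally show ?case .
qed

lemma pl_props:
  assumes "pl_epf lo hi u"
  shows "(\<exists>B. \<forall>x. u x \<le> ereal B) \<and> (\<forall>x. x \<notin> {lo..hi} \<longrightarrow> u x = -\<infinity>) \<and> (\<forall>x\<in>{lo..hi}. \<exists>r. u x = ereal r)"
proof -
  obtain P f where H: "finite P \<and> lo \<in> P \<and> hi \<in> P \<and> P \<subseteq> {lo..hi} \<and>
        (\<forall>x. x \<notin> {lo..hi} \<longrightarrow> u x = -\<infinity>) \<and>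
        (\<forall>x\<in>{lo..hi}. u x = ereal (f x)) \<and>
        (\<forall>a\<in>P. \<forall>b\<in>P. a < b \<and> {a<..<b} \<inter> P = {} \<longrightarrow>
            (\<forall>x\<in>{a..b}. f x = ((b - x) * f a + (x - a) * f b) / (b - a)))"
    using assms unfolding pl_epf_def by (elim exE) (rule that, assumption)
  note P1 = H[THEN conjunct1]
  note P2 = H[THEN conjunct2, THEN conjunct1]
  note P3 = H[THEN conjunct2, THEN conjunct2, THEN conjunct1]
  note P4 = H[THEN conjunct2, THEN conjunct2, THEN conjunct2, THEN conjunct1]
  note P = P1 P2 P3 P4
  note out = H[THEN conjunct2, THEN conjunct2, THEN conjunct2, THEN conjunct2, THEN conjunct1]
  note inn = H[THEN conjunct2, THEN conjunct2, THEN conjunct2, THEN conjunct2, THEN conjunct2, THEN conjunct1]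
  note lin = H[THEN conjunct2, THEN conjunct2, THEN conjunct2, THEN conjunct2, THEN conjunct2, THEN conjunct2]
  define B where "B = Max (f ` P)"
  have fB: "f p \<le> B" if "p \<in> P" for p using P(1) that by (auto simp: B_def)
  have "f x \<le> B" if x: "x \<in> {lo..hi}" for x
  proof -
    define a where "a = Max {p\<in>P. p \<le> x}"
    define b where "b = Min {p\<in>P. x \<le> p}"
    have ne1: "{p\<in>P. p \<le> x} \<noteq> {}" using P x by auto
    have ne2: "{p\<in>P. x \<le> p} \<noteq> {}" using P x by auto
    have a: "a \<in> P" "a \<le> x" using Max_in[OF _ ne1] P(1) by (auto simp: a_def)
    have b: "b \<in> P" "x \<le> b" using Min_in[OF _ ne2] P(1) by (auto simp: b_def)
    have amax: "p \<le> a" if "p \<in> P" "p \<le> x" for p using that P(1) by (auto simp: a_def)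
    have bmin: "b \<le> p" if "p \<in> P" "x \<le> p" for p using that P(1) by (auto simp: b_def)
    show ?thesis
    proof (cases "a = x \<or> b = x")
      case True then show ?thesis using a b fB by auto
    next
      case False
      hence ab: "a < x" "x < b" using a b by auto
      have emp: "{a<..<b} \<inter> P = {}"
      proof (rule ccontr)
        assume "{a<..<b} \<inter> P \<noteq> {}"
        then obtain p where "p \<in> P" "a < p" "p < b" by auto
        then show False
        proof (cases "p \<le> x")
          case True then have "p \<le> a" using amax \<open>p \<in> P\<close> by blast
          then show False using \<open>a < p\<close> by linarith
        next
          case False then have "b \<le> p" using bmin \<open>p \<in> P\<close> by simp
          then show False using \<open>p < b\<close> by linarith
        qed
      qed
      have l2: "a < b \<and> {a<..<b} \<inter> P = {}" using ab emp by simp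
      have fx: "f x = ((b - x) * f a + (x - a) * f b) / (b - a)"
        by (rule lin[rule_format, OF a(1) b(1) l2]) (use ab in simp)
      have "(b - x) * f a + (x - a) * f b \<le> (b - x) * B + (x - a) * B"
        by (intro add_mono mult_left_mono fB) (use a b ab in auto)
      also have "\<dots> = B * (b - a)" by (simp add: algebra_simps)
      finally show ?thesis unfolding fx using ab by (simp add: divide_simps)
    qed
  qed
  hence "\<forall>x. u x \<le> ereal B"
  proof (intro allI)
    fix x assume h: "\<And>x. x \<in> {lo..hi} \<Longrightarrow> f x \<le> B"
    show "u x \<le> ereal B"
    proof (cases "x \<in> {lo..hi}")
      case True then show ?thesis using inn h by simp
    next
      case False then show ?thesis using out by simp
    qed
  qed
  thus ?thesis using out inn by blast
qed

lemma child_info: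
  assumes U_leaf: "\<And>p r1 r2. sub T p = Some (Leaf r1 r2) \<Longrightarrow> U p = leaf_epf r1 r2"
    and U_node: "\<And>p b ts. sub T p = Some (Node b ts) \<Longrightarrow> pl_epf (vlo (Node b ts)) (vhi (Node b ts)) (U p)"
    and s: "sub T q = Some s"
  shows "(\<exists>B. \<forall>x. U q x \<le> ereal B) \<and> (\<forall>x r. U q x = ereal r \<longrightarrow> x \<in> {vlo s..vhi s})"
proof (cases s)
  case (Leaf r1 r2)
  have "U q = leaf_epf r1 r2" using U_leaf s Leaf by auto
  then show ?thesis using Leaf by (auto simp: leaf_epf_def intro!: exI[of _ r1])
next
  case (Node b ts)
  have pl: "pl_epf (vlo s) (vhi s) (U q)" using U_node s Node by simp
  from pl_props[OF pl] obtain B where B: "\<forall>x. U q x \<le> ereal B"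
    and o: "\<forall>x. x \<notin> {vlo s..vhi s} \<longrightarrow> U q x = -\<infinity>" by blast
  have "\<forall>x r. U q x = ereal r \<longrightarrow> x \<in> {vlo s..vhi s}"
  proof (intro allI impI)
    fix x r assume "U q x = ereal r"
    then show "x \<in> {vlo s..vhi s}" using o by (metis MInfty_neq_ereal(2))
  qed
  then show ?thesis using B by blast
qed

lemma linf_le:
  assumes "linf f g \<le> e"
  shows "f \<mu> = g \<mu> \<or> \<bar>f \<mu> - g \<mu>\<bar> \<le> e"
proof -
  have "(if f \<mu> = g \<mu> then 0 else \<bar>f \<mu> - g \<mu>\<bar>) \<le> linf f g"
    unfolding linf_def by (rule SUP_upper) auto
  thus ?thesis using assms by (auto split: if_splits)
qed

lemma linf_nonneg: "0 \<le> linf f g"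
proof -
  have "(if f 0 = g 0 then 0 else \<bar>f 0 - g 0\<bar>) \<le> linf f g"
    unfolding linf_def by (rule SUP_upper) auto
  moreover have "(0::ereal) \<le> (if f 0 = g 0 then 0 else \<bar>f 0 - g 0\<bar>)" by simp
  ultimately show ?thesis by (rule order_trans[rotated])
qed


theorem theorem6:
  fixes T :: gtree
    and U :: "nat list \<Rightarrow> real \<Rightarrow> ereal"
    and Q :: "nat list \<Rightarrow> real \<Rightarrow> real"
    and sel :: "nat list \<Rightarrow> real \<Rightarrow> nat \<times> nat \<times> real \<times> real \<times> real"
    and \<epsilon> :: real
  assumes wf: "wf_tree T"
    and U_leaf: "\<And>p r1 r2. sub T p = Some (Leaf r1 r2) \<Longrightarrow> U p = leaf_epf r1 r2"
    and U_node: "\<And>p b ts. sub T p = Some (Node b ts) \<Longrightarrow>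
                   pl_epf (vlo (Node b ts)) (vhi (Node b ts)) (U p)"
    and loss: "\<And>p. sub T p \<noteq> None \<Longrightarrow> linf (U p) (target T U p) \<le> ereal \<epsilon>"
    and Q_leaf: "\<And>p r1 r2. sub T p = Some (Leaf r1 r2) \<Longrightarrow> Q p r2 = r1"
    and sel_max: "\<And>p b ts \<mu>. sub T p = Some (Node b ts) \<Longrightarrow>
                   \<mu> \<in> {vlo (Node b ts)..vhi (Node b ts)} \<Longrightarrow> is_maximizer U p b ts \<mu> (sel p \<mu>)"
    and Q_node: "\<And>p b ts \<mu> i j t m1 m2. sub T p = Some (Node b ts) \<Longrightarrow>
                   \<mu> \<in> {vlo (Node b ts)..vhi (Node b ts)} \<Longrightarrow> sel p \<mu> = (i, j, t, m1, m2) \<Longrightarrow>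
                   Q p \<mu> = t * Q (p @ [i]) m1 + (1 - t) * Q (p @ [j]) m2"
  shows "\<forall>p s. sub T p = Some s \<longrightarrow> (\<forall>\<mu>\<in>{vlo s..vhi s}.
            \<bar>ereal (Q p \<mu>) - U p \<mu>\<bar> \<le> ereal (\<epsilon> * real (depth T)))"
proof -
  have "0 \<le> linf (U []) (target T U [])" by (rule linf_nonneg)
  also have "\<dots> \<le> ereal \<epsilon>" by (rule loss) simp
  finally have eps: "0 \<le> \<epsilon>" by simp
  have main: "\<And>p \<mu>. sub T p = Some s \<Longrightarrow> \<mu> \<in> {vlo s..vhi s} \<Longrightarrow>
      \<bar>ereal (Q p \<mu>) - U p \<mu>\<bar> \<le> ereal (\<epsilon> * real (depth s))" for s
  proof (induction s)
    case (Leaf r1 r2)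
    then have "\<mu> = r2" by simp
    moreover have "U p = leaf_epf r1 r2" using U_leaf Leaf.prems by blast
    moreover have "Q p r2 = r1" using Q_leaf Leaf.prems by blast
    ultimately show ?case by (simp add: leaf_epf_def)
  next
    case (Node b ts)
    note sp = Node.prems(1)
    note mu = Node.prems(2)
    define n where "n = length ts"
    define d where "d = foldr max (map depth ts) 0"
    define G where "G = (\<lambda>k. trunc (U (p @ [k])) (beta b ts k))"
    obtain i j t m1 m2 where sel: "sel p \<mu> = (i, j, t, m1, m2)" by (cases "sel p \<mu>") auto
    have mx: "is_maximizer U p b ts \<mu> (i, j, t, m1, m2)" using sel_max[OF sp mu] sel by simp
    have feq: "feasible ts \<mu> c = feasN n \<mu> c" for c by (simp add: feasible_def feasN_def n_def)
    have cvq: "cand_val U p b ts c = cvG G c" for c by (cases c) (simp add: cand_val_def cvG_def G_def)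
    have feas: "feasN n \<mu> (i, j, t, m1, m2)" using mx unfolding is_maximizer_def feq by blast
    have mxG: "\<And>c'. feasN n \<mu> c' \<Longrightarrow> cvG G c' \<le> cvG G (i, j, t, m1, m2)"
      using mx unfolding is_maximizer_def feq cvq by blast
    have ij: "i < n" "j < n" "0 \<le> t" "t \<le> 1" using feas by (auto simp: feasN_def)
    have subk: "sub T (p @ [k]) = Some (ts ! k)" if "k < n" for k
      using sub_child[OF sp] that by (simp add: n_def)
    have cinfo: "(\<exists>B. \<forall>x. U (p @ [k]) x \<le> ereal B) \<and>
        (\<forall>x r. U (p @ [k]) x = ereal r \<longrightarrow> x \<in> {vlo (ts ! k)..vhi (ts ! k)})" if "k < n" for k
      by (rule child_info[OF U_leaf U_node subk[OF that]])
    have bndk: "\<exists>B. \<forall>x. G k x \<le> ereal B" if kn: "k < n" for k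
    proof -
      obtain B where B: "\<forall>x. U (p @ [k]) x \<le> ereal B" using cinfo[OF kn] by blast
      have "G k x \<le> ereal B" for x using B by (simp add: G_def trunc_def)
      thus ?thesis by blast
    qed
    obtain Bf where Bf: "\<And>k x. k < n \<Longrightarrow> G k x \<le> ereal (Bf k)"
      using bndk by metis
    define B where "B = (\<Sum>k<n. \<bar>Bf k\<bar>)"
    have bnd: "G k x \<le> ereal B" if "k < n" for k x
    proof -
      have "Bf k \<le> \<bar>Bf k\<bar>" by simp
      also have "\<dots> \<le> B" unfolding B_def by (rule member_le_sum) (use that in auto)
      finally show ?thesis using Bf[OF that, of x] by (simp add: order_trans)
    qed
    have tgt: "target T U p = env {G k | k. k < n}"
      by (simp add: target_def sp G_def n_def)
    have V: "cvG G (i, j, t, m1, m2) = target T U p \<mu>"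
      using env_le_cv[OF bnd feas mxG] cv_le_env[OF feas, of G] tgt by simp
    have pl: "pl_epf (vlo (Node b ts)) (vhi (Node b ts)) (U p)" by (rule U_node[OF sp])
    obtain u where u: "U p \<mu> = ereal u" using pl_props[OF pl] mu by blast
    have lo: "U p \<mu> = target T U p \<mu> \<or> \<bar>U p \<mu> - target T U p \<mu>\<bar> \<le> ereal \<epsilon>"
      by (rule linf_le[OF loss]) (simp add: sp)
    obtain vv where vv: "cvG G (i, j, t, m1, m2) = ereal vv" "\<bar>u - vv\<bar> \<le> \<epsilon>"
    proof (cases "target T U p \<mu>")
      case (real r)
      then show ?thesis using that[of r] lo u V eps by auto
    next
      case PInf then show ?thesis using lo u by auto
    next
      case MInf then show ?thesis using lo u by auto
    qed
    have ninf: "G k x \<noteq> \<infinity>" if "k < n" for k x using bnd[OF that, of x] by auto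
    have s1: "ereal t * G i m1 \<noteq> \<infinity>" using ninf[OF ij(1), of m1] ij(3)
      by (cases "G i m1"; cases "t = 0") (auto simp: zero_ereal_def)
    have s2: "ereal (1 - t) * G j m2 \<noteq> \<infinity>" using ninf[OF ij(2), of m2] ij(4)
      by (cases "G j m2"; cases "1 - t = 0") (auto simp: zero_ereal_def)
    have sum: "ereal t * G i m1 + ereal (1 - t) * G j m2 = ereal vv" using vv(1) by (simp add: cvG_def)
    have n1: "ereal t * G i m1 \<noteq> -\<infinity>"
    proof
      assume h: "ereal t * G i m1 = -\<infinity>"
      obtain y where y: "y = ereal (1 - t) * G j m2" by simp
      have "-\<infinity> + y = ereal vv" using sum by (simp only: h y[symmetric])
      moreover have "y \<noteq> \<infinity>" using s2 y by simp
      ultimately show False by (cases y) auto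
    qed
    have n2: "ereal (1 - t) * G j m2 \<noteq> -\<infinity>"
    proof
      assume h: "ereal (1 - t) * G j m2 = -\<infinity>"
      obtain y where y: "y = ereal t * G i m1" by simp
      have "y + -\<infinity> = ereal vv" using sum by (simp only: h y[symmetric])
      moreover have "y \<noteq> \<infinity>" using s1 y by simp
      ultimately show False by (cases y) auto
    qed
    define g1 where "g1 = real_of_ereal (G i m1)"
    define g2 where "g2 = real_of_ereal (G j m2)"
    have e1: "ereal t * G i m1 = ereal (t * g1)" "t \<noteq> 0 \<longrightarrow> G i m1 = ereal g1"
      using mult_fin[OF ij(3) ninf[OF ij(1)] n1] by (auto simp: g1_def)
    have e2: "ereal (1 - t) * G j m2 = ereal ((1 - t) * g2)" "1 - t \<noteq> 0 \<longrightarrow> G j m2 = ereal g2"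
      using mult_fin[OF _ ninf[OF ij(2)] n2] ij(4) by (auto simp: g2_def)
    have vv_eq: "vv = t * g1 + (1 - t) * g2" using sum e1(1) e2(1) by simp
    have child: "\<bar>Q (p @ [k]) m - g\<bar> \<le> \<epsilon> * d" if k: "k < n" and G: "G k m = ereal g" for k m g
    proof -
      have Ue: "U (p @ [k]) m = ereal g" using G by (simp add: G_def trunc_def split: if_splits)
      hence mr: "m \<in> {vlo (ts ! k)..vhi (ts ! k)}" using cinfo[OF k] by blast
      have mem: "ts ! k \<in> set ts" using k by (simp add: n_def)
      have "\<bar>ereal (Q (p @ [k]) m) - U (p @ [k]) m\<bar> \<le> ereal (\<epsilon> * real (depth (ts ! k)))"
        by (rule Node.IH[OF mem subk[OF k] mr])
      hence "\<bar>Q (p @ [k]) m - g\<bar> \<le> \<epsilon> * real (depth (ts ! k))" using Ue by simp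
      also have "\<dots> \<le> \<epsilon> * d"
        using depth_child[of k ts] k eps by (simp add: n_def d_def mult_left_mono)
      finally show ?thesis .
    qed
    have t1: "\<bar>t * (Q (p @ [i]) m1 - g1)\<bar> \<le> t * (\<epsilon> * d)"
    proof (cases "t = 0")
      case True then show ?thesis by simp
    next
      case False
      have "\<bar>Q (p @ [i]) m1 - g1\<bar> \<le> \<epsilon> * d" using child[OF ij(1)] e1(2) False by blast
      thus ?thesis using ij(3) by (simp add: abs_mult mult_left_mono)
    qed
    have t2: "\<bar>(1 - t) * (Q (p @ [j]) m2 - g2)\<bar> \<le> (1 - t) * (\<epsilon> * d)"
    proof (cases "1 - t = 0")
      case True then show ?thesis by simp
    next
      case False
      have "\<bar>Q (p @ [j]) m2 - g2\<bar> \<le> \<epsilon> * d" using child[OF ij(2)] e2(2) False by blast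
      thus ?thesis using ij(4) by (simp add: abs_mult mult_left_mono)
    qed
    have Qe: "Q p \<mu> = t * Q (p @ [i]) m1 + (1 - t) * Q (p @ [j]) m2" by (rule Q_node[OF sp mu sel])
    have "Q p \<mu> - u = t * (Q (p @ [i]) m1 - g1) + (1 - t) * (Q (p @ [j]) m2 - g2) + (vv - u)"
      unfolding Qe vv_eq by (simp add: algebra_simps)
    hence "\<bar>Q p \<mu> - u\<bar> \<le> t * (\<epsilon> * d) + (1 - t) * (\<epsilon> * d) + \<epsilon>"
      using t1 t2 vv(2) by (smt (verit))
    also have "\<dots> = \<epsilon> * real (depth (Node b ts))" by (simp add: d_def algebra_simps)
    finally show ?case using u by simp
  qed
  show ?thesis
  proof (intro allI impI ballI)
    fix p s \<mu> assume s: "sub T p = Some s" and m: "\<mu> \<in> {vlo s..vhi s}"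
    have "\<bar>ereal (Q p \<mu>) - U p \<mu>\<bar> \<le> ereal (\<epsilon> * real (depth s))" by (rule main[OF s m])
    also have "\<dots> \<le> ereal (\<epsilon> * real (depth T))" using depth_sub[OF s] eps by (simp add: mult_left_mono)
    finally show "\<bar>ereal (Q p \<mu>) - U p \<mu>\<bar> \<le> ereal (\<epsilon> * real (depth T))" .
  qed
qed

end
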